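(* Assume that for some $p>1$ there is $\nu_p>0$ with $\mathbb E\{|\omega|^p\mid X\}\le \nu_p$ almost surely; when $p\ge 2$ let moreover $\nu_2>0$ satisfy $\mathbb E\{\omega^2\mid X\}\le\nu_2$ a.s. For $\tau>0$ consider $$g_{0,\tau}\in\operatorname*{argmin}_{g}\ \mathbb E\,\ell_\tau\big(Z(f_0)-\alpha g(X)\big),$$ the minimum being over all measurable $g:\mathbb R^d\to\mathbb R$. If $\tau\ge (4\nu_p)^{1/p}$ when $1<p<2$, or $\tau\ge(4\nu_2)^{1/2}$ when $p\ge 2$, then a minimizer $g_{0,\tau}$ exists, it is unique up to sets of $P_X$-probability zero, and $$\alpha\,\|g_{0,\tau}-g_0\|_\infty\le 2\nu_p\,\tau^{1-p}.$$
   Context: Let $(Y,X)\in\mathbb R\times[0,1]^d$ be a random pair with $X\sim P_X$. Fix $\alpha\in(0,1)$. Let $f_0:[0,1]^d\to\mathbb R$ satisfy $\mathbb P(Y\le f_0(X)\mid X=x)=\alpha$ (conditional $\alpha$-quantile) and $g_0(x)=\alpha^{-1}\mathbb E[Y\mathbb 1\{Y\le f_0(X)\}\mid X=x]$ (conditional expected shortfall). Set $\epsilon=Y-f_0(X)$, $\epsilon_-=\min(\epsilon,0)$ and $\omega=\epsilon_--\mathbb E(\epsilon_-\mid X)$. For $f:[0,1]^d\to\mathbb R$ define the surrogate response $Z(f)=\min\{Y-f(X),0\}+\alpha f(X)$ (so $Z(f_0)=\alpha g_0(X)+\omega$). The Huber loss with parameter $\tau>0$ is $\ell_\tau(u)=\tfrac12u^2\mathbb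 1(|u|\le\tau)+(\tau|u|-\tau^2/2)\mathbb 1(|u|>\tau)$. $\|h\|_\infty=\sup_x|h(x)|$ (essential sup w.r.t. $P_X$). *)

theory Defs
  imports "HOL-Probability.Probability"
begin

definition huber_loss :: "real \<Rightarrow> real \<Rightarrow> real" where
  "huber_loss \<tau> u = (if \<bar>u\<bar> \<le> \<tau> then u\<^sup>2 / 2 else \<tau> * \<bar>u\<bar> - \<tau>\<^sup>2 / 2)"

definition surrogate ::
  "('a \<Rightarrow> real) \<Rightarrow> ('a \<Rightarrow> 'b) \<Rightarrow> real \<Rightarrow> ('b \<Rightarrow> real) \<Rightarrow> 'a \<Rightarrow> real" where
  "surrogate Y X \<alpha> f w = min (Y w - f (X w)) 0 + \<alpha> * f (X w)"

definition sigma_of :: "'a measure \<Rightarrow> ('a \<Rightarrow> 'b::topological_space) \<Rightarrow> 'a measure" where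
  "sigma_of M X = vimage_algebra (space M) X borel"

definition huber_risk ::
  "'a measure \<Rightarrow> ('a \<Rightarrow> 'b) \<Rightarrow> ('a \<Rightarrow> real) \<Rightarrow> real \<Rightarrow> real \<Rightarrow> ('b \<Rightarrow> real) \<Rightarrow> ennreal" where
  "huber_risk M X Z \<alpha> \<tau> g = (\<integral>\<^sup>+ w. ennreal (huber_loss \<tau> (Z w - \<alpha> * g (X w))) \<partial>M)"

definition huber_argmin ::
  "'a measure \<Rightarrow> ('a \<Rightarrow> 'b::topological_space) \<Rightarrow> ('a \<Rightarrow> real) \<Rightarrow> real \<Rightarrow> real \<Rightarrow> ('b \<Rightarrow> real) \<Rightarrow> bool" where
  "huber_argmin M X Z \<alpha> \<tau> g \<longleftrightarrow> g \<in> borel_measurable borel \<and>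
     (\<forall>h \<in> borel_measurable borel. huber_risk M X Z \<alpha> \<tau> g \<le> huber_risk M X Z \<alpha> \<tau> h)"

end

theory Submission
  imports Defs
begin

definition psi :: "real \<Rightarrow> real \<Rightarrow> real" where
  "psi \<tau> x = max (- \<tau>) (min \<tau> x)"

lemma huber_tangent:
  assumes t: "\<tau> > 0"
  shows "huber_loss \<tau> a + psi \<tau> a * (b - a) \<le> huber_loss \<tau> b"
proof -
  have sq: "0 \<le> (b - a)\<^sup>2" "0 \<le> (b - \<tau>)\<^sup>2" "0 \<le> (b + \<tau>)\<^sup>2" "0 \<le> (a - \<tau>)\<^sup>2" "0 \<le> (a + \<tau>)\<^sup>2" by auto
  have c11: "a < -\<tau> \<Longrightarrow> b < -\<tau> \<Longrightarrow> ?thesis" using t unfolding huber_loss_def psi_def by (auto simp: abs_if algebra_simps)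
  have c12: "a < -\<tau> \<Longrightarrow> \<bar>b\<bar> \<le> \<tau> \<Longrightarrow> ?thesis" using sq unfolding huber_loss_def psi_def
        by (auto simp: power2_eq_square algebra_simps)
  have c13: "a < -\<tau> \<Longrightarrow> b > \<tau> \<Longrightarrow> ?thesis" using t unfolding huber_loss_def psi_def
        by (auto simp: algebra_simps)
  have c21: "\<bar>a\<bar> \<le> \<tau> \<Longrightarrow> b < -\<tau> \<Longrightarrow> ?thesis"
  proof -
    assume h: "\<bar>a\<bar> \<le> \<tau>" "b < -\<tau>"
    have "0 \<le> (a+\<tau>)*((a-\<tau>)/2 - b)" by (rule mult_nonneg_nonneg) (use h in auto)
    with h show ?thesis unfolding huber_loss_def psi_def
        by (auto simp: power2_eq_square algebra_simps; simp add: field_simps; linarith)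
  qed
  have c22: "\<bar>a\<bar> \<le> \<tau> \<Longrightarrow> \<bar>b\<bar> \<le> \<tau> \<Longrightarrow> ?thesis" using sq unfolding huber_loss_def psi_def
        by (auto simp: power2_eq_square algebra_simps)
  have c23: "\<bar>a\<bar> \<le> \<tau> \<Longrightarrow> b > \<tau> \<Longrightarrow> ?thesis"
  proof -
    assume h: "\<bar>a\<bar> \<le> \<tau>" "b > \<tau>"
    have "0 \<le> (\<tau> - a)*(b - (a+\<tau>)/2)" by (rule mult_nonneg_nonneg) (use h in auto)
    with h show ?thesis unfolding huber_loss_def psi_def
        by (auto simp: power2_eq_square algebra_simps; simp add: field_simps; linarith)
  qed
  have c31: "a > \<tau> \<Longrightarrow> b < -\<tau> \<Longrightarrow> ?thesis"
  proof -
    assume h: "a > \<tau>" "b < -\<tau>"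
    have "\<tau> * b \<le> 0" using h t by (simp add: mult_pos_neg less_imp_le)
    with h t show ?thesis unfolding huber_loss_def psi_def by (auto simp: algebra_simps)
  qed
  have c32: "a > \<tau> \<Longrightarrow> \<bar>b\<bar> \<le> \<tau> \<Longrightarrow> ?thesis" using sq unfolding huber_loss_def psi_def
        by (auto simp: power2_eq_square algebra_simps)
  have c33: "a > \<tau> \<Longrightarrow> b > \<tau> \<Longrightarrow> ?thesis" using t unfolding huber_loss_def psi_def by (auto simp: abs_if algebra_simps)
  show ?thesis using c11 c12 c13 c21 c22 c23 c31 c32 c33 by linarith
qed

lemma huber_strict:
  assumes t: "\<tau> > 0" and a: "\<bar>a\<bar> < \<tau>" and ab: "a \<noteq> b"
  shows "huber_loss \<tau> a + psi \<tau> a * (b - a) < huber_loss \<tau> b"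
proof -
  have c1: "b < -\<tau> \<Longrightarrow> ?thesis"
  proof -
    assume h: "b < -\<tau>"
    have "0 < (a+\<tau>)*((a-\<tau>)/2 - b)" by (rule mult_pos_pos) (use h a in auto)
    with h a show ?thesis unfolding huber_loss_def psi_def
        by (auto simp: power2_eq_square algebra_simps; simp add: field_simps; linarith)
  qed
  have c2: "\<bar>b\<bar> \<le> \<tau> \<Longrightarrow> ?thesis"
  proof -
    assume h: "\<bar>b\<bar> \<le> \<tau>"
    have "0 < (b - a)\<^sup>2" using ab by simp
    with h a show ?thesis unfolding huber_loss_def psi_def
        by (auto simp: power2_eq_square algebra_simps)
  qed
  have c3: "b > \<tau> \<Longrightarrow> ?thesis"
  proof -
    assume h: "b > \<tau>"
    have "0 < (\<tau> - a)*(b - (a+\<tau>)/2)" by (rule mult_pos_pos) (use h a in auto)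
    with h a show ?thesis unfolding huber_loss_def psi_def
        by (auto simp: power2_eq_square algebra_simps; simp add: field_simps; linarith)
  qed
  show ?thesis using c1 c2 c3 by linarith
qed

lemma huber_nonneg: "\<tau> > 0 \<Longrightarrow> 0 \<le> huber_loss \<tau> x"
proof -
  assume t: "\<tau> > 0"
  have "\<not> \<bar>x\<bar> \<le> \<tau> \<Longrightarrow> \<tau> * \<tau> \<le> \<tau> * \<bar>x\<bar>" using t by (intro mult_left_mono) auto
  moreover have "0 \<le> \<tau> * \<bar>x\<bar>" using t by simp
  ultimately show ?thesis unfolding huber_loss_def by (auto simp: power2_eq_square)
qed

lemma huber_le_abs: "\<tau> > 0 \<Longrightarrow> huber_loss \<tau> x \<le> \<tau> * \<bar>x\<bar>"
proof -
  assume t: "\<tau> > 0"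
  have "\<bar>x\<bar> \<le> \<tau> \<Longrightarrow> \<bar>x\<bar> * \<bar>x\<bar> \<le> \<tau> * \<bar>x\<bar>" by (intro mult_right_mono) auto
  moreover have "0 \<le> \<tau> * \<bar>x\<bar>" using t by simp
  moreover have "x\<^sup>2 = \<bar>x\<bar> * \<bar>x\<bar>" by (simp add: power2_eq_square abs_mult_self_eq)
  ultimately show ?thesis unfolding huber_loss_def using t by (auto; linarith)
qed

lemma huber_ge_abs: "\<tau> > 0 \<Longrightarrow> \<tau> * \<bar>x\<bar> \<le> huber_loss \<tau> x + \<tau>\<^sup>2 / 2"
proof -
  assume t: "\<tau> > 0"
  have "0 \<le> (\<bar>x\<bar> - \<tau>)\<^sup>2" by simp
  then show ?thesis unfolding huber_loss_def using t by (auto simp: power2_eq_square algebra_simps abs_mult_self_eq)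
qed

lemma psi_lipschitz: "\<bar>psi \<tau> a - psi \<tau> b\<bar> \<le> \<bar>a - b\<bar>"
  unfolding psi_def by (auto simp: max_def min_def)

lemma psi_bound: "\<tau> \<ge> 0 \<Longrightarrow> \<bar>psi \<tau> a\<bar> \<le> \<tau>"
  unfolding psi_def by (auto simp: max_def min_def)

lemma psi_mono: "a \<le> b \<Longrightarrow> psi \<tau> a \<le> psi \<tau> b"
  unfolding psi_def by (auto simp: max_def min_def)

lemma T_mono: "a \<le> b \<Longrightarrow> a + psi \<tau> (w - a) \<le> b + psi \<tau> (w - b)"
  unfolding psi_def by (auto simp: max_def min_def)

lemma psi_upper: "psi \<tau> t \<le> t + max 0 (- t - \<tau>)"
  unfolding psi_def by (auto simp: max_def min_def)

lemma negpart_powr: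
  fixes w b p :: real
  assumes b: "b > 0" and p: "p > 1"
  shows "max 0 (- w - b) \<le> \<bar>w\<bar> powr p * b powr (1 - p)"
proof (cases "- w - b \<le> 0")
  case True
  then have "max 0 (- w - b) = 0" by (rule max_absorb1)
  moreover have "0 \<le> \<bar>w\<bar> powr p * b powr (1 - p)" by simp
  ultimately show ?thesis by simp
next
  case False
  then have wb: "\<bar>w\<bar> > b" by auto
  have "1 \<le> (\<bar>w\<bar> / b) powr (p - 1)" using wb b p by (intro ge_one_powr_ge_zero) auto
  then have "\<bar>w\<bar> \<le> \<bar>w\<bar> * (\<bar>w\<bar> / b) powr (p - 1)" by (simp add: mult_le_cancel_left1)
  also have "\<dots> = \<bar>w\<bar> powr p * b powr (1 - p)"
    using wb b by (simp add: powr_divide powr_diff powr_minus_divide divide_simps powr_mult_base' algebra_simps)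
  finally show ?thesis using False b by auto
qed

lemma negpart_powr2:
  fixes w \<tau> p :: real
  assumes t: "\<tau> > 0" and p: "p \<ge> 2"
  shows "max 0 (- w - \<tau>) \<le> \<bar>w\<bar> powr p * \<tau> powr (1 - p) / 2"
proof (cases "- w - \<tau> \<le> 0")
  case True
  then have "max 0 (- w - \<tau>) = 0" by (rule max_absorb1)
  moreover have "0 \<le> \<bar>w\<bar> powr p * \<tau> powr (1 - p) / 2" by simp
  ultimately show ?thesis by simp
next
  case False
  then have wb: "\<bar>w\<bar> > \<tau>" by auto
  define r where "r = \<bar>w\<bar> / \<tau>"
  have r1: "r > 1" using wb t by (simp add: r_def)
  have "r powr 2 \<le> r powr p" using r1 p by (intro powr_mono) auto
  moreover have "r powr 2 = r\<^sup>2" using r1 by (simp add: powr_numeral)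
  moreover have "2 * (r - 1) \<le> r\<^sup>2" proof - have "0 \<le> (r - 1)\<^sup>2 + 1" by simp then show ?thesis by (simp add: power2_eq_square algebra_simps) qed
  ultimately have "r - 1 \<le> r powr p / 2" by simp
  then have "\<tau> * (r - 1) \<le> \<tau> * (r powr p / 2)" using t by (intro mult_left_mono) auto
  moreover have "\<tau> * (r - 1) = \<bar>w\<bar> - \<tau>" using t by (simp add: r_def field_simps)
  moreover have "\<tau> * (r powr p / 2) = \<bar>w\<bar> powr p * \<tau> powr (1 - p) / 2"
    using t wb by (simp add: r_def powr_divide powr_diff field_simps)
  ultimately show ?thesis using False t by auto
qed

lemma negpart_sq:
  fixes w b :: real
  assumes b: "b > 0"
  shows "max 0 (- w - b) \<le> w\<^sup>2 / (4 * b)"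
proof -
  have "0 \<le> (w + 2 * b)\<^sup>2" by simp
  then have "4 * b * (- w - b) \<le> w\<^sup>2" by (simp add: power2_eq_square algebra_simps)
  then have "- w - b \<le> w\<^sup>2 / (4 * b)" using b by (simp add: field_simps)
  moreover have "0 \<le> w\<^sup>2 / (4 * b)" using b by simp
  ultimately show ?thesis by simp
qed

lemma psi_shift_bound:
  fixes w L \<tau> :: real
  assumes L: "0 \<le> L" "L < \<tau>"
  shows "psi \<tau> (w - L) \<le> psi \<tau> w - L + L * w\<^sup>2 / (\<tau> - L)\<^sup>2"
proof (cases "L - \<tau> \<le> w \<and> w \<le> \<tau>")
  case True
  then have "psi \<tau> (w - L) = w - L" "psi \<tau> w = w" using L unfolding psi_def by auto
  moreover have "0 \<le> L * w\<^sup>2 / (\<tau> - L)\<^sup>2" using L by simp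
  ultimately show ?thesis by simp
next
  case False
  then have "\<bar>w\<bar> \<ge> \<tau> - L" using L by auto
  then have "(\<tau> - L)\<^sup>2 \<le> \<bar>w\<bar>\<^sup>2" using L by (intro power_mono) auto
  then have "1 \<le> w\<^sup>2 / (\<tau> - L)\<^sup>2" using L by simp
  then have "L \<le> L * w\<^sup>2 / (\<tau> - L)\<^sup>2" using L mult_left_mono[of 1 "w\<^sup>2 / (\<tau> - L)\<^sup>2" L] by simp
  moreover have "psi \<tau> (w - L) \<le> psi \<tau> w" using L by (intro psi_mono) auto
  ultimately show ?thesis by simp
qed

lemma borel_measurable_psi[measurable (raw)]:
  assumes [measurable]: "f \<in> borel_measurable M"
  shows "(\<lambda>x. psi t (f x)) \<in> borel_measurable M"
  unfolding psi_def by measurable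

lemma borel_measurable_huber[measurable (raw)]:
  assumes [measurable]: "f \<in> borel_measurable M"
  shows "(\<lambda>x. huber_loss t (f x)) \<in> borel_measurable M"
  unfolding huber_loss_def by measurable

locale hcore = prob_space M for M :: "'a measure" +
  fixes F :: "'a measure" and W :: "'a \<Rightarrow> real" and \<tau> L :: real
  assumes subalg: "subalgebra M F"
    and W_meas[measurable]: "W \<in> borel_measurable M"
    and W_int: "integrable M W"
    and tau: "\<tau> > 0" and L: "0 \<le> L" "L < \<tau>"
    and DL: "AE w in M. real_cond_exp M F (\<lambda>w. psi \<tau> (W w - L)) w \<le> 0"
    and DmL: "AE w in M. real_cond_exp M F (\<lambda>w. psi \<tau> (W w + L)) w \<ge> 0"
begin

sublocale fms: finite_measure_subalgebra M F
  by unfold_locales (rule subalg)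

lemma Fmeas_M: "h \<in> borel_measurable F \<Longrightarrow> h \<in> borel_measurable M"
  by (rule measurable_from_subalg[OF subalg])

lemma sets_F_M: "A \<in> sets F \<Longrightarrow> A \<in> sets M"
  using subalg unfolding subalgebra_def by auto

lemma space_F: "space F = space M"
  using subalg unfolding subalgebra_def by auto

lemma int_bdd:
  fixes B :: real
  assumes "h \<in> borel_measurable M" "\<And>w. w \<in> space M \<Longrightarrow> \<bar>h w\<bar> \<le> B"
  shows "integrable M h"
  by (rule integrable_const_bound[where B=B]) (use assms in auto)

definition Dc :: "('a \<Rightarrow> real) \<Rightarrow> 'a \<Rightarrow> real" where
  "Dc h = real_cond_exp M F (\<lambda>w. psi \<tau> (W w - h w))"

lemma Dc_meas[measurable]: "Dc h \<in> borel_measurable F"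
  unfolding Dc_def by simp

lemma psi_int: "h \<in> borel_measurable M \<Longrightarrow> integrable M (\<lambda>w. psi \<tau> (W w - h w))"
  by (rule int_bdd[where B=\<tau>]) (use tau psi_bound in auto)

definition Tm :: "('a \<Rightarrow> real) \<Rightarrow> 'a \<Rightarrow> real" where
  "Tm h = (\<lambda>w. h w + Dc h w)"

lemma Tm_meas: "h \<in> borel_measurable F \<Longrightarrow> Tm h \<in> borel_measurable F"
  using Dc_meas[of h] unfolding Tm_def by (intro borel_measurable_add)

lemma Tm_ae:
  assumes hF: "h \<in> borel_measurable F" and hb: "\<And>w. w \<in> space M \<Longrightarrow> \<bar>h w\<bar> \<le> B"
  shows "AE w in M. real_cond_exp M F (\<lambda>w. h w + psi \<tau> (W w - h w)) w = Tm h w"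
proof -
  have hM: "h \<in> borel_measurable M" by (rule Fmeas_M[OF hF])
  have ih: "integrable M h" by (rule int_bdd[OF hM hb])
  have "AE w in M. real_cond_exp M F (\<lambda>w. h w + psi \<tau> (W w - h w)) w
      = real_cond_exp M F h w + real_cond_exp M F (\<lambda>w. psi \<tau> (W w - h w)) w"
    by (rule fms.real_cond_exp_add[OF ih psi_int[OF hM]])
  moreover have "AE w in M. real_cond_exp M F h w = h w"
    by (rule fms.real_cond_exp_F_meas[OF ih hF])
  ultimately show ?thesis unfolding Tm_def Dc_def by auto
qed

lemma Tm_mono:
  assumes aF: "a \<in> borel_measurable F" and ab: "\<And>w. w \<in> space M \<Longrightarrow> \<bar>a w\<bar> \<le> B"
    and bF: "b \<in> borel_measurable F" and bb: "\<And>w. w \<in> space M \<Longrightarrow> \<bar>b w\<bar> \<le> B"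
    and le: "AE w in M. a w \<le> b w"
  shows "AE w in M. Tm a w \<le> Tm b w"
proof -
  have aM: "a \<in> borel_measurable M" by (rule Fmeas_M[OF aF])
  have bM: "b \<in> borel_measurable M" by (rule Fmeas_M[OF bF])
  have ia: "integrable M (\<lambda>w. a w + psi \<tau> (W w - a w))"
    by (intro Bochner_Integration.integrable_add int_bdd[OF aM ab] psi_int[OF aM])
  have ib: "integrable M (\<lambda>w. b w + psi \<tau> (W w - b w))"
    by (intro Bochner_Integration.integrable_add int_bdd[OF bM bb] psi_int[OF bM])
  have "AE w in M. real_cond_exp M F (\<lambda>w. a w + psi \<tau> (W w - a w)) w
        \<le> real_cond_exp M F (\<lambda>w. b w + psi \<tau> (W w - b w)) w"
    by (rule fms.real_cond_exp_mono[OF _ ia ib]) (use le T_mono in auto)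
  with Tm_ae[OF aF ab] Tm_ae[OF bF bb] show ?thesis by auto
qed

lemma Tm_bound:
  assumes hF: "h \<in> borel_measurable F" and hb: "\<And>w. w \<in> space M \<Longrightarrow> \<bar>h w\<bar> \<le> L"
  shows "AE w in M. - L \<le> Tm h w \<and> Tm h w \<le> L"
proof -
  have cF: "(\<lambda>w. c) \<in> borel_measurable F" for c :: real by simp
  have up: "AE w in M. Tm h w \<le> Tm (\<lambda>w. L) w"
    by (rule Tm_mono[OF hF hb cF]) (use hb L in \<open>auto intro!: AE_I2 simp: abs_le_iff\<close>)
  have lo: "AE w in M. Tm (\<lambda>w. - L) w \<le> Tm h w"
  proof (rule Tm_mono[OF cF _ hF hb])
    show "AE w in M. - L \<le> h w"
    proof (rule AE_I2)
      fix w assume "w \<in> space M"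
      from hb[OF this] show "- L \<le> h w" by linarith
    qed
  qed (use L in auto)
  have "Dc (\<lambda>w. - L) = real_cond_exp M F (\<lambda>w. psi \<tau> (W w + L))"
    unfolding Dc_def by simp
  then have "AE w in M. Dc (\<lambda>w. - L) w \<ge> 0" using DmL by simp
  moreover have "AE w in M. Dc (\<lambda>w. L) w \<le> 0" using DL unfolding Dc_def by simp
  ultimately show ?thesis using up lo unfolding Tm_def by auto
qed

lemma Dc_lip:
  assumes aF: "a \<in> borel_measurable F" and ab: "\<And>w. w \<in> space M \<Longrightarrow> \<bar>a w\<bar> \<le> B"
    and bF: "b \<in> borel_measurable F" and bb: "\<And>w. w \<in> space M \<Longrightarrow> \<bar>b w\<bar> \<le> B"
  shows "AE w in M. Dc a w \<le> Dc b w + \<bar>a w - b w\<bar>"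
proof -
  have aM: "a \<in> borel_measurable M" by (rule Fmeas_M[OF aF])
  have bM: "b \<in> borel_measurable M" by (rule Fmeas_M[OF bF])
  have dF: "(\<lambda>w. \<bar>a w - b w\<bar>) \<in> borel_measurable F" using aF bF by measurable
  have id: "integrable M (\<lambda>w. \<bar>a w - b w\<bar>)"
  proof (rule int_bdd[where B="2*B"])
    fix w assume w: "w \<in> space M"
    from ab[OF w] bb[OF w] show "\<bar>\<bar>a w - b w\<bar>\<bar> \<le> 2 * B" by linarith
  qed (use aM bM in auto)
  have ib: "integrable M (\<lambda>w. psi \<tau> (W w - b w) + \<bar>a w - b w\<bar>)"
    by (intro Bochner_Integration.integrable_add psi_int[OF bM] id)
  have "AE w in M. real_cond_exp M F (\<lambda>w. psi \<tau> (W w - a w)) w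
        \<le> real_cond_exp M F (\<lambda>w. psi \<tau> (W w - b w) + \<bar>a w - b w\<bar>) w"
  proof (rule fms.real_cond_exp_mono[OF _ psi_int[OF aM] ib])
    show "AE w in M. psi \<tau> (W w - a w) \<le> psi \<tau> (W w - b w) + \<bar>a w - b w\<bar>"
    proof (rule AE_I2)
      fix w
      have "\<bar>psi \<tau> (W w - a w) - psi \<tau> (W w - b w)\<bar> \<le> \<bar>(W w - a w) - (W w - b w)\<bar>"
        by (rule psi_lipschitz)
      then show "psi \<tau> (W w - a w) \<le> psi \<tau> (W w - b w) + \<bar>a w - b w\<bar>" by auto
    qed
  qed
  moreover have "AE w in M. real_cond_exp M F (\<lambda>w. psi \<tau> (W w - b w) + \<bar>a w - b w\<bar>) w
       = real_cond_exp M F (\<lambda>w. psi \<tau> (W w - b w)) w + real_cond_exp M F (\<lambda>w. \<bar>a w - b w\<bar>) w"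
    by (rule fms.real_cond_exp_add[OF psi_int[OF bM] id])
  moreover have "AE w in M. real_cond_exp M F (\<lambda>w. \<bar>a w - b w\<bar>) w = \<bar>a w - b w\<bar>"
    by (rule fms.real_cond_exp_F_meas[OF id dF])
  ultimately show ?thesis unfolding Dc_def by auto
qed

definition clampL :: "real \<Rightarrow> real" where
  "clampL x = max (- L) (min L x)"

lemma clampL_bound: "\<bar>clampL x\<bar> \<le> L"
  using L unfolding clampL_def by auto

lemma clampL_mono: "x \<le> y \<Longrightarrow> clampL x \<le> clampL y"
  unfolding clampL_def by auto

lemma clampL_id: "\<bar>x\<bar> \<le> L \<Longrightarrow> clampL x = x"
  unfolding clampL_def by auto

primrec hs :: "nat \<Rightarrow> 'a \<Rightarrow> real" where
  "hs 0 = (\<lambda>w. - L)"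
| "hs (Suc k) = (\<lambda>w. clampL (Tm (hs k) w))"

lemma hs_meas: "hs k \<in> borel_measurable F"
proof (induction k)
  case 0 then show ?case by simp
next
  case (Suc k)
  have "Tm (hs k) \<in> borel_measurable F" by (rule Tm_meas[OF Suc])
  then show ?case unfolding hs.simps clampL_def by measurable
qed

lemma hs_bound: "\<bar>hs k w\<bar> \<le> L"
  by (cases k) (use L clampL_bound in auto)

lemma hs_Suc_ae: "AE w in M. hs (Suc k) w = Tm (hs k) w"
  using Tm_bound[OF hs_meas[of k] hs_bound]
proof eventually_elim
  case (elim w) then show ?case by (simp add: clampL_id abs_le_iff)
qed

lemma hs_mono_ae: "AE w in M. hs k w \<le> hs (Suc k) w"
proof (induction k)
  case 0 show ?case using L by (auto simp: clampL_def)
next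
  case (Suc k)
  have "AE w in M. Tm (hs k) w \<le> Tm (hs (Suc k)) w"
    by (rule Tm_mono[OF hs_meas hs_bound hs_meas hs_bound Suc])
  then show ?case by (auto intro: clampL_mono)
qed

definition hinf :: "'a \<Rightarrow> real" where
  "hinf w = (SUP k. hs k w)"

lemma hs_bdd: "bdd_above (range (\<lambda>k. hs k w))"
  using hs_bound by (intro bdd_aboveI[where M=L]) (auto simp: abs_le_iff)

lemma hinf_meas: "hinf \<in> borel_measurable F"
  unfolding hinf_def
  by (rule borel_measurable_cSUP) (auto intro: hs_meas hs_bdd)

lemma hinf_bound: "\<bar>hinf w\<bar> \<le> L"
proof -
  have "hinf w \<le> L" unfolding hinf_def using hs_bound by (intro cSUP_least) (auto simp: abs_le_iff)
  moreover have "hs 0 w \<le> hinf w" unfolding hinf_def by (rule cSUP_upper[OF _ hs_bdd]) auto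
  ultimately show ?thesis using L by auto
qed

lemma hinf_lim_ae: "AE w in M. (\<lambda>k. hs k w) \<longlonglongrightarrow> hinf w"
proof -
  have "AE w in M. \<forall>k. hs k w \<le> hs (Suc k) w" using hs_mono_ae by (simp add: AE_all_countable)
  then show ?thesis
  proof (rule AE_mp, intro AE_I2 impI)
    fix w assume "\<forall>k. hs k w \<le> hs (Suc k) w"
    then have "incseq (\<lambda>k. hs k w)" by (intro incseq_SucI) auto
    then show "(\<lambda>k. hs k w) \<longlonglongrightarrow> hinf w" unfolding hinf_def
      by (rule LIMSEQ_incseq_SUP[OF hs_bdd])
  qed
qed

lemma hinf_fix: "AE w in M. Dc hinf w = 0"
proof -
  have lip1: "AE w in M. \<forall>k. Dc hinf w \<le> Dc (hs k) w + \<bar>hinf w - hs k w\<bar>"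
    unfolding AE_all_countable
    by (intro allI Dc_lip[OF hinf_meas hinf_bound hs_meas hs_bound])
  have lip2: "AE w in M. \<forall>k. Dc (hs k) w \<le> Dc hinf w + \<bar>hs k w - hinf w\<bar>"
    unfolding AE_all_countable
    by (intro allI Dc_lip[OF hs_meas hs_bound hinf_meas hinf_bound])
  have suc: "AE w in M. \<forall>k. hs (Suc k) w = Tm (hs k) w"
    unfolding AE_all_countable by (intro allI hs_Suc_ae)
  show ?thesis using lip1 lip2 suc hinf_lim_ae
  proof eventually_elim
    case (elim w)
    define d where "d k = Dc (hs k) w" for k
    have d_eq: "d k = hs (Suc k) w - hs k w" for k
      using elim(3) unfolding d_def Tm_def by auto
    have l1: "(\<lambda>k. hs (Suc k) w) \<longlonglongrightarrow> hinf w"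
      using elim(4) by (rule LIMSEQ_Suc)
    have "(\<lambda>k. hs (Suc k) w - hs k w) \<longlonglongrightarrow> hinf w - hinf w"
      by (intro tendsto_diff l1 elim(4))
    then have d0: "d \<longlonglongrightarrow> 0" unfolding d_eq by simp
    have "(\<lambda>k. hs k w - hinf w) \<longlonglongrightarrow> hinf w - hinf w"
      by (intro tendsto_diff elim(4) tendsto_const)
    then have e0: "(\<lambda>k. \<bar>hs k w - hinf w\<bar>) \<longlonglongrightarrow> 0"
      using tendsto_rabs_zero_iff by fastforce
    have "(\<lambda>k. d k - Dc hinf w) \<longlonglongrightarrow> 0"
    proof (rule Lim_null_comparison[OF _ e0])
      show "\<forall>\<^sub>F k in sequentially. norm (d k - Dc hinf w) \<le> \<bar>hs k w - hinf w\<bar>"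
      proof (intro always_eventually allI)
        fix k
        have a: "Dc hinf w \<le> d k + \<bar>hs k w - hinf w\<bar>" using elim(1) unfolding d_def by (simp add: abs_minus_commute)
        have b: "d k \<le> Dc hinf w + \<bar>hs k w - hinf w\<bar>" using elim(2) unfolding d_def by (simp add: abs_minus_commute)
        show "norm (d k - Dc hinf w) \<le> \<bar>hs k w - hinf w\<bar>" using a b by (simp add: abs_le_iff)
      qed
    qed
    moreover have "(\<lambda>k. d k - Dc hinf w) \<longlonglongrightarrow> 0 - Dc hinf w"
      by (intro tendsto_diff d0 tendsto_const)
    ultimately have "0 - Dc hinf w = 0" using LIMSEQ_unique by blast
    then show ?case by simp
  qed
qed

lemma loss_int_h:
  assumes hM: "h \<in> borel_measurable M" and hb: "\<And>w. \<bar>h w\<bar> \<le> L"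
  shows "integrable M (\<lambda>w. huber_loss \<tau> (W w - h w))"
proof (rule Bochner_Integration.integrable_bound[where f="\<lambda>w. \<tau> * (\<bar>W w\<bar> + L)"])
  show "integrable M (\<lambda>w. \<tau> * (\<bar>W w\<bar> + L))" using W_int by auto
  show "AE w in M. norm (huber_loss \<tau> (W w - h w)) \<le> norm (\<tau> * (\<bar>W w\<bar> + L))"
  proof (rule AE_I2)
    fix w
    have "huber_loss \<tau> (W w - h w) \<le> \<tau> * \<bar>W w - h w\<bar>" by (rule huber_le_abs[OF tau])
    also have "\<dots> \<le> \<tau> * (\<bar>W w\<bar> + L)" using tau hb[of w] by (intro mult_left_mono) auto
    finally show "norm (huber_loss \<tau> (W w - h w)) \<le> norm (\<tau> * (\<bar>W w\<bar> + L))"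
      using huber_nonneg[OF tau, of "W w - h w"] tau L by auto
  qed
qed (use hM in measurable)

lemma loss_int_u:
  assumes uM: "u \<in> borel_measurable M"
    and fin: "(\<integral>\<^sup>+ w. ennreal (huber_loss \<tau> (W w - u w)) \<partial>M) < \<infinity>"
  shows "integrable M (\<lambda>w. huber_loss \<tau> (W w - u w))" "integrable M u"
proof -
  show li: "integrable M (\<lambda>w. huber_loss \<tau> (W w - u w))"
    by (rule integrableI_nonneg) (use fin uM huber_nonneg[OF tau] in auto)
  show "integrable M u"
  proof (rule Bochner_Integration.integrable_bound[where f="\<lambda>w. \<bar>W w\<bar> + (huber_loss \<tau> (W w - u w) + \<tau>\<^sup>2/2) / \<tau>"])
    show "integrable M (\<lambda>w. \<bar>W w\<bar> + (huber_loss \<tau> (W w - u w) + \<tau>\<^sup>2/2) / \<tau>)"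
      using W_int li by auto
    show "AE w in M. norm (u w) \<le> norm (\<bar>W w\<bar> + (huber_loss \<tau> (W w - u w) + \<tau>\<^sup>2/2) / \<tau>)"
    proof (rule AE_I2)
      fix w
      have "\<tau> * \<bar>W w - u w\<bar> \<le> huber_loss \<tau> (W w - u w) + \<tau>\<^sup>2/2" by (rule huber_ge_abs[OF tau])
      then have "\<bar>W w - u w\<bar> \<le> (huber_loss \<tau> (W w - u w) + \<tau>\<^sup>2/2) / \<tau>"
        using tau by (simp add: field_simps)
      moreover have "0 \<le> (huber_loss \<tau> (W w - u w) + \<tau>\<^sup>2/2) / \<tau>"
        using tau huber_nonneg[OF tau, of "W w - u w"] by simp
      ultimately show "norm (u w) \<le> norm (\<bar>W w\<bar> + (huber_loss \<tau> (W w - u w) + \<tau>\<^sup>2/2) / \<tau>)"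
        by auto
    qed
  qed (use uM in simp)
qed

lemma cross_zero:
  assumes hF: "h \<in> borel_measurable F" and hb: "\<And>w. \<bar>h w\<bar> \<le> L"
    and fix0: "AE w in M. Dc h w = 0"
    and uF: "u \<in> borel_measurable F" and ui: "integrable M u"
  shows "integrable M (\<lambda>w. (h w - u w) * psi \<tau> (W w - h w))"
    "(\<integral> w. (h w - u w) * psi \<tau> (W w - h w) \<partial>M) = 0"
proof -
  have hM: "h \<in> borel_measurable M" by (rule Fmeas_M[OF hF])
  have uM: "u \<in> borel_measurable M" by (rule Fmeas_M[OF uF])
  have ihu: "integrable M (\<lambda>w. h w - u w)"
    using int_bdd[OF hM, of L] hb ui by auto
  show ii: "integrable M (\<lambda>w. (h w - u w) * psi \<tau> (W w - h w))"
  proof (rule Bochner_Integration.integrable_bound[where f="\<lambda>w. \<tau> * (h w - u w)"])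
    show "integrable M (\<lambda>w. \<tau> * (h w - u w))" using ihu by auto
    show "AE w in M. norm ((h w - u w) * psi \<tau> (W w - h w)) \<le> norm (\<tau> * (h w - u w))"
    proof (rule AE_I2)
      fix w
      have "\<bar>psi \<tau> (W w - h w)\<bar> \<le> \<tau>" using psi_bound tau by auto
      then have "\<bar>h w - u w\<bar> * \<bar>psi \<tau> (W w - h w)\<bar> \<le> \<bar>h w - u w\<bar> * \<tau>" by (intro mult_left_mono) auto
      then show "norm ((h w - u w) * psi \<tau> (W w - h w)) \<le> norm (\<tau> * (h w - u w))"
        using tau by (simp add: abs_mult mult.commute)
    qed
  qed (use hM uM in measurable)
  have dF: "(\<lambda>w. h w - u w) \<in> borel_measurable F" using hF uF by measurable
  have "(\<integral> w. (h w - u w) * real_cond_exp M F (\<lambda>w. psi \<tau> (W w - h w)) w \<partial>M)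
      = (\<integral> w. (h w - u w) * psi \<tau> (W w - h w) \<partial>M)"
    by (rule fms.real_cond_exp_intg(2)[OF ii dF]) (use hM in measurable)
  moreover have "(\<integral> w. (h w - u w) * real_cond_exp M F (\<lambda>w. psi \<tau> (W w - h w)) w \<partial>M) = (\<integral> w. 0 \<partial>M)"
    by (rule integral_cong_AE) (use fix0 hM uM in \<open>auto simp: Dc_def\<close>)
  ultimately show "(\<integral> w. (h w - u w) * psi \<tau> (W w - h w) \<partial>M) = 0" by simp
qed

lemma optimal:
  assumes hF: "h \<in> borel_measurable F" and hb: "\<And>w. \<bar>h w\<bar> \<le> L"
    and fix0: "AE w in M. Dc h w = 0"
    and uF: "u \<in> borel_measurable F"
  shows "(\<integral>\<^sup>+ w. ennreal (huber_loss \<tau> (W w - h w)) \<partial>M) \<le> (\<integral>\<^sup>+ w. ennreal (huber_loss \<tau> (W w - u w)) \<partial>M)"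
proof (cases "(\<integral>\<^sup>+ w. ennreal (huber_loss \<tau> (W w - u w)) \<partial>M) < \<infinity>")
  case False then show ?thesis by (simp add: not_less top_unique)
next
  case True
  have hM: "h \<in> borel_measurable M" by (rule Fmeas_M[OF hF])
  have uM: "u \<in> borel_measurable M" by (rule Fmeas_M[OF uF])
  note lu = loss_int_u[OF uM True]
  note lh = loss_int_h[OF hM hb]
  note cz = cross_zero[OF hF hb fix0 uF lu(2)]
  have "(\<integral> w. huber_loss \<tau> (W w - h w) \<partial>M) = (\<integral> w. huber_loss \<tau> (W w - h w) + (h w - u w) * psi \<tau> (W w - h w) \<partial>M)"
    using lh cz by simp
  also have "\<dots> \<le> (\<integral> w. huber_loss \<tau> (W w - u w) \<partial>M)"
  proof (rule integral_mono)
    show "integrable M (\<lambda>w. huber_loss \<tau> (W w - h w) + (h w - u w) * psi \<tau> (W w - h w))"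
      using lh cz by auto
    show "integrable M (\<lambda>w. huber_loss \<tau> (W w - u w))" by (rule lu(1))
    fix w
    have "huber_loss \<tau> (W w - h w) + psi \<tau> (W w - h w) * ((W w - u w) - (W w - h w)) \<le> huber_loss \<tau> (W w - u w)"
      by (rule huber_tangent[OF tau])
    then show "huber_loss \<tau> (W w - h w) + (h w - u w) * psi \<tau> (W w - h w) \<le> huber_loss \<tau> (W w - u w)"
      by (simp add: algebra_simps)
  qed
  finally have le: "(\<integral> w. huber_loss \<tau> (W w - h w) \<partial>M) \<le> (\<integral> w. huber_loss \<tau> (W w - u w) \<partial>M)" .
  have "(\<integral>\<^sup>+ w. ennreal (huber_loss \<tau> (W w - h w)) \<partial>M) = ennreal (\<integral> w. huber_loss \<tau> (W w - h w) \<partial>M)"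
    by (rule nn_integral_eq_integral[OF lh]) (use huber_nonneg[OF tau] in auto)
  moreover have "(\<integral>\<^sup>+ w. ennreal (huber_loss \<tau> (W w - u w)) \<partial>M) = ennreal (\<integral> w. huber_loss \<tau> (W w - u w) \<partial>M)"
    by (rule nn_integral_eq_integral[OF lu(1)]) (use huber_nonneg[OF tau] in auto)
  ultimately show ?thesis using le by (simp add: ennreal_leI)
qed

lemma unique:
  fixes \<Phi> :: "real \<Rightarrow> real" and \<nu> K :: real
  assumes hF: "h \<in> borel_measurable F" and hb: "\<And>w. \<bar>h w\<bar> \<le> L"
    and fix0: "AE w in M. Dc h w = 0"
    and uF: "u \<in> borel_measurable F"
    and le: "(\<integral>\<^sup>+ w. ennreal (huber_loss \<tau> (W w - u w)) \<partial>M) \<le> (\<integral>\<^sup>+ w. ennreal (huber_loss \<tau> (W w - h w)) \<partial>M)"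
    and Phi_meas: "(\<lambda>w. \<Phi> (W w)) \<in> borel_measurable M"
    and Phi_int: "integrable M (\<lambda>w. \<Phi> (W w))"
    and Phi_ce: "AE w in M. real_cond_exp M F (\<lambda>w. \<Phi> (W w)) w \<le> \<nu>"
    and Phi_big: "\<And>x. \<bar>x\<bar> \<ge> \<tau> - L \<Longrightarrow> \<Phi> x \<ge> K"
    and K: "\<nu> < K"
  shows "AE w in M. u w = h w"
proof -
  have hM: "h \<in> borel_measurable M" by (rule Fmeas_M[OF hF])
  have uM: "u \<in> borel_measurable M" by (rule Fmeas_M[OF uF])
  note lh = loss_int_h[OF hM hb]
  have eqh: "(\<integral>\<^sup>+ w. ennreal (huber_loss \<tau> (W w - h w)) \<partial>M) = ennreal (\<integral> w. huber_loss \<tau> (W w - h w) \<partial>M)"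
    by (rule nn_integral_eq_integral[OF lh]) (use huber_nonneg[OF tau] in auto)
  have fin: "(\<integral>\<^sup>+ w. ennreal (huber_loss \<tau> (W w - u w)) \<partial>M) < \<infinity>"
    using le eqh by (simp add: le_less_trans)
  note lu = loss_int_u[OF uM fin]
  have equ: "(\<integral>\<^sup>+ w. ennreal (huber_loss \<tau> (W w - u w)) \<partial>M) = ennreal (\<integral> w. huber_loss \<tau> (W w - u w) \<partial>M)"
    by (rule nn_integral_eq_integral[OF lu(1)]) (use huber_nonneg[OF tau] in auto)
  have lei: "(\<integral> w. huber_loss \<tau> (W w - u w) \<partial>M) \<le> (\<integral> w. huber_loss \<tau> (W w - h w) \<partial>M)"
    using le equ eqh by (simp add: ennreal_le_iff integral_nonneg_AE huber_nonneg[OF tau])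
  note cz = cross_zero[OF hF hb fix0 uF lu(2)]
  define G where "G w = huber_loss \<tau> (W w - u w) - huber_loss \<tau> (W w - h w) - (h w - u w) * psi \<tau> (W w - h w)" for w
  have Gi: "integrable M G" unfolding G_def using lu(1) lh cz(1) by auto
  have Gnn: "0 \<le> G w" for w
  proof -
    have "huber_loss \<tau> (W w - h w) + psi \<tau> (W w - h w) * ((W w - u w) - (W w - h w)) \<le> huber_loss \<tau> (W w - u w)"
      by (rule huber_tangent[OF tau])
    then show ?thesis unfolding G_def by (simp add: algebra_simps)
  qed
  have "(\<integral> w. G w \<partial>M) = (\<integral> w. huber_loss \<tau> (W w - u w) \<partial>M) - (\<integral> w. huber_loss \<tau> (W w - h w) \<partial>M) - (\<integral> w. (h w - u w) * psi \<tau> (W w - h w) \<partial>M)"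
    unfolding G_def using lu(1) lh cz(1) by simp
  then have "(\<integral> w. G w \<partial>M) \<le> 0" using lei cz(2) by simp
  moreover have "(\<integral> w. G w \<partial>M) \<ge> 0" using Gnn by (simp add: integral_nonneg_AE)
  ultimately have "(\<integral> w. G w \<partial>M) = 0" by simp
  then have G0: "AE w in M. G w = 0" using integral_nonneg_eq_0_iff_AE[OF Gi] Gnn by simp
  have bigAE: "AE w in M. u w \<noteq> h w \<longrightarrow> \<Phi> (W w) \<ge> K"
    using G0
  proof eventually_elim
    case (elim w)
    show ?case
    proof
      assume ne: "u w \<noteq> h w"
      have "\<bar>W w - h w\<bar> \<ge> \<tau>"
      proof (rule ccontr)
        assume "\<not> \<bar>W w - h w\<bar> \<ge> \<tau>"
        then have "huber_loss \<tau> (W w - h w) + psi \<tau> (W w - h w) * ((W w - u w) - (W w - h w)) < huber_loss \<tau> (W w - u w)"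
          using ne by (intro huber_strict[OF tau]) auto
        then have "G w > 0" unfolding G_def by (simp add: algebra_simps)
        with elim show False by simp
      qed
      then have "\<bar>W w\<bar> \<ge> \<tau> - L" using hb[of w] by auto
      then show "\<Phi> (W w) \<ge> K" by (rule Phi_big)
    qed
  qed
  define B where "B = {w \<in> space M. u w \<noteq> h w}"
  have BF: "B \<in> sets F" unfolding B_def
  proof -
    have "{w \<in> space F. u w \<noteq> h w} \<in> sets F" using uF hF by measurable
    then show "{w \<in> space M. u w \<noteq> h w} \<in> sets F" using space_F by simp
  qed
  have BM: "B \<in> sets M" by (rule sets_F_M[OF BF])
  have indF: "indicator B \<in> borel_measurable F" using BF by simp
  have iI: "integrable M (\<lambda>w. c * indicator B w)" for c :: real
    using BM by (intro integrable_mult_right integrable_real_indicator) (auto simp: less_top[symmetric])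
  have iB: "integrable M (\<lambda>w. indicator B w * \<Phi> (W w))"
    using integrable_real_mult_indicator[OF BM Phi_int] by (simp add: mult.commute)
  have "(\<integral> w. indicator B w * real_cond_exp M F (\<lambda>w. \<Phi> (W w)) w \<partial>M) = (\<integral> w. indicator B w * \<Phi> (W w) \<partial>M)"
    by (rule fms.real_cond_exp_intg(2)[OF iB indF Phi_meas])
  moreover have iB2: "integrable M (\<lambda>w. indicator B w * real_cond_exp M F (\<lambda>w. \<Phi> (W w)) w)"
    by (rule fms.real_cond_exp_intg(1)[OF iB indF Phi_meas])
  moreover have "(\<integral> w. indicator B w * real_cond_exp M F (\<lambda>w. \<Phi> (W w)) w \<partial>M) \<le> (\<integral> w. \<nu> * indicator B w \<partial>M)"
    by (rule integral_mono_AE[OF iB2 iI]) (use Phi_ce in \<open>auto split: split_indicator\<close>)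
  moreover have "(\<integral> w. K * indicator B w \<partial>M) \<le> (\<integral> w. indicator B w * \<Phi> (W w) \<partial>M)"
    by (rule integral_mono_AE[OF iI iB]) (use bigAE BM in \<open>auto split: split_indicator simp: B_def\<close>)
  ultimately have "K * measure M B \<le> \<nu> * measure M B" using BM by simp
  then have "measure M B = 0" using K measure_nonneg[of M B]
    by (metis antisym mult_le_cancel_right not_le)
  then have "B \<in> null_sets M" using BM by (simp add: emeasure_eq_measure null_sets_def)
  then have "AE w in M. w \<notin> B" by (rule AE_not_in)
  then show ?thesis by (auto simp: B_def)
qed

end

lemma doob_dynkin:
  fixes X :: "'a \<Rightarrow> 'b::topological_space" and h :: "'a \<Rightarrow> real"
  assumes hm: "h \<in> borel_measurable (vimage_algebra S X borel)"
  shows "\<exists>c \<in> borel_measurable borel. \<forall>w\<in>S. h w = c (X w)"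
proof -
  have "\<forall>r::rat. \<exists>A \<in> sets borel. X -` A \<inter> S = {w \<in> S. h w < of_rat r}"
  proof
    fix r :: rat
    have "{w \<in> space (vimage_algebra S X borel). h w < of_rat r} \<in> sets (vimage_algebra S X borel)"
      using hm by measurable
    then have "{w \<in> S. h w < of_rat r} \<in> {X -` A \<inter> S | A. A \<in> sets borel}"
      using sets_vimage_algebra2[of X S "borel :: 'b measure"] by simp
    then show "\<exists>A \<in> sets borel. X -` A \<inter> S = {w \<in> S. h w < of_rat r}" by blast
  qed
  then obtain A where A: "\<And>r. A r \<in> sets borel" "\<And>r. X -` A r \<inter> S = {w \<in> S. h w < of_rat r}"
    by metis
  define c' where "c' x = (INF r. if x \<in> A r then ereal (of_rat r) else \<infinity>)" for x
  define c where "c x = real_of_ereal (c' x)" for x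
  have [measurable]: "A r \<in> sets borel" for r by (rule A(1))
  have "c' \<in> borel_measurable borel" unfolding c'_def
    by (rule borel_measurable_INF) auto
  then have cm: "c \<in> borel_measurable borel" unfolding c_def by measurable
  have "h w = c (X w)" if w: "w \<in> S" for w
  proof -
    have iff: "X w \<in> A r \<longleftrightarrow> h w < of_rat r" for r
      using A(2)[of r] w by blast
    have "c' (X w) = ereal (h w)"
    proof (rule antisym)
      show "ereal (h w) \<le> c' (X w)" unfolding c'_def
        by (rule INF_greatest) (auto simp: iff)
      show "c' (X w) \<le> ereal (h w)"
      proof (rule dense_ge)
        fix y assume y: "ereal (h w) < y"
        obtain z where z: "ereal (h w) < ereal z" "ereal z < y" using ereal_dense2[OF y] by blast
        obtain r where r: "h w < of_rat r" "of_rat r < z" using of_rat_dense[of "h w" z] z(1) by auto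
        have "c' (X w) \<le> (if X w \<in> A r then ereal (of_rat r) else \<infinity>)" unfolding c'_def
          by (rule INF_lower) simp
        also have "\<dots> = ereal (of_rat r)" using r iff by simp
        also have "\<dots> \<le> y"
        proof -
          have "ereal (of_rat r) \<le> ereal z" using r(2) by simp
          then show ?thesis using z(2) by (meson order.strict_implies_order order_trans)
        qed
        finally show "c' (X w) \<le> y" .
      qed
    qed
    then show ?thesis unfolding c_def by simp
  qed
  with cm show ?thesis by blast
qed

context finite_measure_subalgebra
begin

lemma ce_from_nn:
  fixes f :: "'a \<Rightarrow> real" and \<nu> :: real
  assumes fm[measurable]: "f \<in> borel_measurable M" and fnn: "\<And>w. 0 \<le> f w" and nu: "0 \<le> \<nu>"
    and bd: "AE w in M. nn_cond_exp M F (\<lambda>w. ennreal (f w)) w \<le> ennreal \<nu>"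
  shows "integrable M f" "AE w in M. real_cond_exp M F f w \<le> \<nu>"
proof -
  have "(\<integral>\<^sup>+ w. ennreal (f w) \<partial>M) = (\<integral>\<^sup>+ w. 1 * ennreal (f w) \<partial>M)" by simp
  also have "\<dots> = (\<integral>\<^sup>+ w. 1 * nn_cond_exp M F (\<lambda>w. ennreal (f w)) w \<partial>M)"
    by (rule nn_cond_exp_intg[symmetric]) auto
  also have "\<dots> \<le> (\<integral>\<^sup>+ w. ennreal \<nu> \<partial>M)"
    by (rule nn_integral_mono_AE) (use bd in auto)
  also have "\<dots> < \<infinity>"
  proof -
    have "emeasure M (space M) < \<infinity>" by (simp add: less_top[symmetric])
    then show ?thesis by (simp add: ennreal_mult_less_top)
  qed
  finally show "integrable M f"
    by (intro integrableI_nonneg) (auto simp: fnn)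
  show "AE w in M. real_cond_exp M F f w \<le> \<nu>"
    using bd
  proof eventually_elim
    case (elim w)
    have "real_cond_exp M F f w \<le> enn2real (nn_cond_exp M F (\<lambda>w. ennreal (f w)) w)"
      unfolding real_cond_exp_def by simp
    also have "\<dots> \<le> \<nu>" by (rule enn2real_leI[OF nu elim])
    finally show ?case .
  qed
qed

lemma ce_lin:
  fixes a b :: "'a \<Rightarrow> real"
  assumes ia: "integrable M a" and ib: "integrable M b"
  shows "AE w in M. real_cond_exp M F (\<lambda>w. a w + c * b w + d) w = real_cond_exp M F a w + c * real_cond_exp M F b w + d"
proof -
  have icb: "integrable M (\<lambda>w. c * b w)" using ib by auto
  have iab: "integrable M (\<lambda>w. a w + c * b w)" using ia icb by auto
  have idc: "integrable M (\<lambda>w. d)" by simp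
  have dF: "(\<lambda>w. d) \<in> borel_measurable F" by simp
  have "AE w in M. real_cond_exp M F (\<lambda>w. (a w + c * b w) + d) w = real_cond_exp M F (\<lambda>w. a w + c * b w) w + real_cond_exp M F (\<lambda>w. d) w"
    by (rule real_cond_exp_add[OF iab idc])
  moreover have "AE w in M. real_cond_exp M F (\<lambda>w. a w + c * b w) w = real_cond_exp M F a w + real_cond_exp M F (\<lambda>w. c * b w) w"
    by (rule real_cond_exp_add[OF ia icb])
  moreover have "AE w in M. real_cond_exp M F (\<lambda>w. c * b w) w = c * real_cond_exp M F b w"
    by (rule real_cond_exp_cmult[OF ib])
  moreover have "AE w in M. real_cond_exp M F (\<lambda>w. d) w = d"
    by (rule real_cond_exp_F_meas[OF idc dF])
  ultimately show ?thesis by eventually_elim auto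
qed

end


lemma delta_le:
  fixes p \<nu> \<tau> :: real
  assumes tau: "\<tau> > 0" and t: "c * \<nu> \<le> \<tau> powr p" and c: "c > 0"
  shows "2 * \<nu> * \<tau> powr (1 - p) \<le> 2 * \<tau> / c"
proof -
  have e: "\<tau> powr (1 - p) = \<tau> / \<tau> powr p" using tau by (simp add: powr_diff)
  have "2 * \<nu> * \<tau> powr (1 - p) = 2 * \<tau> * \<nu> / \<tau> powr p" unfolding e by simp
  also have "\<dots> \<le> 2 * \<tau> / c" using t tau c by (simp add: field_simps)
  finally show ?thesis .
qed

lemma DL_gen:
  fixes W :: "'a \<Rightarrow> real" and p \<nu>p \<nu>2 \<tau> L :: real
  assumes fms: "finite_measure_subalgebra M F"
  and Wm[measurable]: "W \<in> borel_measurable M" and Wi: "integrable M W"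
  and W0: "AE w in M. real_cond_exp M F W w = 0"
  and p: "p > 1" and nup: "\<nu>p > 0"
  and ip: "integrable M (\<lambda>w. \<bar>W w\<bar> powr p)"
  and cp: "AE w in M. real_cond_exp M F (\<lambda>w. \<bar>W w\<bar> powr p) w \<le> \<nu>p"
  and m2: "p \<ge> 2 \<Longrightarrow> \<nu>2 > 0 \<and> integrable M (\<lambda>w. (W w)\<^sup>2) \<and> (AE w in M. real_cond_exp M F (\<lambda>w. (W w)\<^sup>2) w \<le> \<nu>2)"
  and tau: "\<tau> > 0"
  and ts: "p < 2 \<Longrightarrow> 4 * \<nu>p \<le> \<tau> powr p"
  and tl: "p \<ge> 2 \<Longrightarrow> 4 * \<nu>2 \<le> \<tau>\<^sup>2"
  and Ldef: "L = (if p < 2 then 2 * \<nu>p * \<tau> powr (1 - p) else min (2 * \<nu>p * \<tau> powr (1 - p)) (\<tau> / 4))"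
  shows "AE w in M. real_cond_exp M F (\<lambda>w. psi \<tau> (W w - L)) w \<le> 0"
proof -
  interpret fms: finite_measure_subalgebra M F by (rule fms)
  define \<delta> where "\<delta> = 2 * \<nu>p * \<tau> powr (1 - p)"
  have \<delta>0: "\<delta> > 0" unfolding \<delta>_def using nup tau by simp
  have ipsi: "integrable M (\<lambda>w. psi \<tau> (W w - L))"
    by (rule fms.integrable_const_bound[where B=\<tau>]) (use tau psi_bound in auto)
  show ?thesis
  proof (cases "p < 2")
    case True
    then have L: "L = \<delta>" using Ldef \<delta>_def by simp
    have Lle: "L \<le> \<tau> / 2" using delta_le[OF tau _, of 4 \<nu>p p] ts[OF True] unfolding L \<delta>_def by simp
    define b where "b = \<tau> - L"
    have b: "b \<ge> \<tau> / 2" "b > 0" using Lle tau unfolding b_def by auto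
    define c where "c = b powr (1 - p)"
    have pt: "psi \<tau> (W w - L) \<le> W w + c * \<bar>W w\<bar> powr p + - L" for w
    proof -
      have "psi \<tau> (W w - L) \<le> (W w - L) + max 0 (- (W w - L) - \<tau>)" by (rule psi_upper)
      also have "- (W w - L) - \<tau> = - W w - b" unfolding b_def by simp
      also have "max 0 (- W w - b) \<le> \<bar>W w\<bar> powr p * b powr (1 - p)" by (rule negpart_powr[OF b(2) p])
      finally show ?thesis unfolding c_def by (simp add: mult.commute)
    qed
    have A1: "AE w in M. real_cond_exp M F (\<lambda>w. psi \<tau> (W w - L)) w \<le> real_cond_exp M F (\<lambda>w. W w + c * \<bar>W w\<bar> powr p + - L) w"
      by (rule fms.real_cond_exp_mono) (use pt ipsi Wi ip in auto)
    have A2: "AE w in M. real_cond_exp M F (\<lambda>w. W w + c * \<bar>W w\<bar> powr p + - L) w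
       = real_cond_exp M F W w + c * real_cond_exp M F (\<lambda>w. \<bar>W w\<bar> powr p) w + - L"
      by (rule fms.ce_lin[OF Wi ip])
    have cle: "c * \<nu>p \<le> L"
    proof -
      have "c \<le> (\<tau> / 2) powr (1 - p)" unfolding c_def using p b tau by (intro powr_mono2') auto
      also have "(\<tau> / 2) powr (1 - p) = \<tau> powr (1 - p) * 2 powr (p - 1)"
        by (simp add: powr_divide powr_minus_divide powr_diff divide_simps)
      also have "\<dots> \<le> \<tau> powr (1 - p) * 2"
      proof -
        have "2 powr (p - 1) \<le> 2 powr 1" using True by (intro powr_mono) auto
        then show ?thesis by (intro mult_left_mono) auto
      qed
      finally have "c * \<nu>p \<le> \<tau> powr (1 - p) * 2 * \<nu>p" using nup by (intro mult_right_mono) auto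
      then show ?thesis unfolding L \<delta>_def by (simp add: algebra_simps)
    qed
    have c0: "c \<ge> 0" unfolding c_def by simp
    show ?thesis using A1 A2 W0 cp
    proof eventually_elim
      case (elim w)
      have "c * real_cond_exp M F (\<lambda>w. \<bar>W w\<bar> powr p) w \<le> c * \<nu>p" using elim(4) c0 by (intro mult_left_mono) auto
      then show ?case using elim(1,2,3) cle by linarith
    qed
  next
    case False
    then have p2: "p \<ge> 2" by simp
    note m = m2[OF p2]
    have nu2: "\<nu>2 > 0" and i2: "integrable M (\<lambda>w. (W w)\<^sup>2)"
      and c2: "AE w in M. real_cond_exp M F (\<lambda>w. (W w)\<^sup>2) w \<le> \<nu>2" using m by auto
    have tl2: "4 * \<nu>2 \<le> \<tau>\<^sup>2" by (rule tl[OF p2])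
    show ?thesis
    proof (cases "\<delta> \<le> \<tau> / 4")
      case True
      then have L: "L = \<delta>" using Ldef \<delta>_def False by simp
      have L0: "L \<ge> 0" "L \<le> \<tau> / 4" using \<delta>0 True L by auto
      define c1 where "c1 = \<tau> powr (1 - p) / 2"
      define c2 where "c2 = L / (\<tau> - L)\<^sup>2"
      have pt: "psi \<tau> (W w - L) \<le> (W w + c1 * \<bar>W w\<bar> powr p) + c2 * (W w)\<^sup>2 + - L" for w
      proof -
        have "psi \<tau> (W w - L) \<le> psi \<tau> (W w) - L + L * (W w)\<^sup>2 / (\<tau> - L)\<^sup>2"
          by (rule psi_shift_bound) (use L0 tau in auto)
        moreover have "psi \<tau> (W w) \<le> W w + max 0 (- W w - \<tau>)" by (rule psi_upper)
        moreover have "max 0 (- W w - \<tau>) \<le> \<bar>W w\<bar> powr p * \<tau> powr (1 - p) / 2" by (rule negpart_powr2[OF tau p2])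
        ultimately show ?thesis unfolding c1_def c2_def by (simp add: algebra_simps)
      qed
      have ia: "integrable M (\<lambda>w. W w + c1 * \<bar>W w\<bar> powr p)" using Wi ip by auto
      have A1: "AE w in M. real_cond_exp M F (\<lambda>w. psi \<tau> (W w - L)) w \<le> real_cond_exp M F (\<lambda>w. (W w + c1 * \<bar>W w\<bar> powr p) + c2 * (W w)\<^sup>2 + - L) w"
        by (rule fms.real_cond_exp_mono) (use pt ipsi ia i2 in auto)
      have A2: "AE w in M. real_cond_exp M F (\<lambda>w. (W w + c1 * \<bar>W w\<bar> powr p) + c2 * (W w)\<^sup>2 + - L) w
         = real_cond_exp M F (\<lambda>w. W w + c1 * \<bar>W w\<bar> powr p) w + c2 * real_cond_exp M F (\<lambda>w. (W w)\<^sup>2) w + - L"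
        by (rule fms.ce_lin[OF ia i2])
      have A3: "AE w in M. real_cond_exp M F (\<lambda>w. W w + c1 * \<bar>W w\<bar> powr p + 0) w
         = real_cond_exp M F W w + c1 * real_cond_exp M F (\<lambda>w. \<bar>W w\<bar> powr p) w + 0"
        by (rule fms.ce_lin[OF Wi ip])
      have c10: "c1 \<ge> 0" unfolding c1_def by simp
      have c20: "c2 \<ge> 0" unfolding c2_def using L0 by simp
      have e1: "c1 * \<nu>p = L / 4" unfolding c1_def L \<delta>_def by simp
      have e2: "c2 * \<nu>2 \<le> 4 * L / 9"
      proof -
        have "3 * \<tau> / 4 \<le> \<tau> - L" using L0 by simp
        then have "(3 * \<tau> / 4)\<^sup>2 \<le> (\<tau> - L)\<^sup>2" using tau by (intro power_mono) auto
        then have "9 * \<nu>2 \<le> 4 * (\<tau> - L)\<^sup>2" using tl2 by (simp add: power2_eq_square field_simps)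
        moreover have "(\<tau> - L)\<^sup>2 > 0" using L0 tau by simp
        ultimately have "\<nu>2 / (\<tau> - L)\<^sup>2 \<le> 4 / 9" by (simp add: field_simps)
        then have "L * (\<nu>2 / (\<tau> - L)\<^sup>2) \<le> L * (4 / 9)" using L0 by (intro mult_left_mono) auto
        then show ?thesis unfolding c2_def by (simp add: field_simps)
      qed
      show ?thesis using A1 A2 A3 W0 cp c2
      proof eventually_elim
        case (elim w)
        have a: "c1 * real_cond_exp M F (\<lambda>w. \<bar>W w\<bar> powr p) w \<le> c1 * \<nu>p" using elim(5) c10 by (intro mult_left_mono) auto
        have b: "c2 * real_cond_exp M F (\<lambda>w. (W w)\<^sup>2) w \<le> c2 * \<nu>2" using elim(6) c20 by (intro mult_left_mono) auto
        show ?case using elim(1,2,3,4) a b e1 e2 L0 by simp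
      qed
    next
      case False2: False
      then have L: "L = \<tau> / 4" using Ldef \<delta>_def False by simp
      define c2 where "c2 = 1 / (4 * (\<tau> - L))"
      have pt: "psi \<tau> (W w - L) \<le> W w + c2 * (W w)\<^sup>2 + - L" for w
      proof -
        have "psi \<tau> (W w - L) \<le> (W w - L) + max 0 (- (W w - L) - \<tau>)" by (rule psi_upper)
        also have "- (W w - L) - \<tau> = - W w - (\<tau> - L)" by simp
        also have "max 0 (- W w - (\<tau> - L)) \<le> (W w)\<^sup>2 / (4 * (\<tau> - L))" by (rule negpart_sq) (use L tau in simp)
        finally show ?thesis unfolding c2_def by simp
      qed
      have A1: "AE w in M. real_cond_exp M F (\<lambda>w. psi \<tau> (W w - L)) w \<le> real_cond_exp M F (\<lambda>w. W w + c2 * (W w)\<^sup>2 + - L) w"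
        by (rule fms.real_cond_exp_mono) (use pt ipsi Wi i2 in auto)
      have A2: "AE w in M. real_cond_exp M F (\<lambda>w. W w + c2 * (W w)\<^sup>2 + - L) w
         = real_cond_exp M F W w + c2 * real_cond_exp M F (\<lambda>w. (W w)\<^sup>2) w + - L"
        by (rule fms.ce_lin[OF Wi i2])
      have c20: "c2 \<ge> 0" unfolding c2_def L using tau by simp
      have "c2 * \<nu>2 \<le> L"
      proof -
        have "c2 * \<nu>2 = \<nu>2 / (3 * \<tau>)" unfolding c2_def L by (simp add: field_simps)
        also have "\<dots> \<le> \<tau> / 12" using tl2 tau by (simp add: field_simps power2_eq_square)
        finally show ?thesis unfolding L using tau by linarith
      qed
      show ?thesis using A1 A2 W0 c2
      proof eventually_elim
        case (elim w)
        have b: "c2 * real_cond_exp M F (\<lambda>w. (W w)\<^sup>2) w \<le> c2 * \<nu>2" using elim(4) c20 by (intro mult_left_mono) auto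
        show ?case using elim(1,2,3) b \<open>c2 * \<nu>2 \<le> L\<close> by simp
      qed
    qed
  qed
qed

theorem proposition2p1:
  fixes M :: "'a measure"
    and Y :: "'a \<Rightarrow> real"
    and X :: "'a \<Rightarrow> real ^ 'd"
    and f\<^sub>0 g\<^sub>0 :: "real ^ 'd \<Rightarrow> real"
    and \<alpha> p \<nu>\<^sub>p \<nu>\<^sub>2 \<tau> :: real
  defines "F \<equiv> sigma_of M X"
    and "\<epsilon>\<^sub>m \<equiv> (\<lambda>w. min (Y w - f\<^sub>0 (X w)) 0)"
  defines "\<omega> \<equiv> (\<lambda>w. \<epsilon>\<^sub>m w - real_cond_exp M F \<epsilon>\<^sub>m w)"
  assumes M: "prob_space M"
    and Y_meas: "Y \<in> borel_measurable M"
    and X_meas: "X \<in> borel_measurable M"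
    and X_range: "\<And>w. w \<in> space M \<Longrightarrow> X w \<in> cbox 0 1"
    and alpha: "0 < \<alpha>" "\<alpha> < 1"
    and f0_meas: "f\<^sub>0 \<in> borel_measurable borel"
    and g0_meas: "g\<^sub>0 \<in> borel_measurable borel"
    and quantile: "AE w in M. real_cond_exp M F (indicator {w. Y w \<le> f\<^sub>0 (X w)}) w = \<alpha>"
    and ES_integrable: "integrable M (\<lambda>w. Y w * indicator {w. Y w \<le> f\<^sub>0 (X w)} w)"
    and eps_integrable: "integrable M \<epsilon>\<^sub>m"
    and shortfall: "AE w in M. g\<^sub>0 (X w) =
           real_cond_exp M F (\<lambda>w. Y w * indicator {w. Y w \<le> f\<^sub>0 (X w)} w) w / \<alpha>"
    and p: "p > 1"
    and nu_p: "\<nu>\<^sub>p > 0"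
    and moment_p: "AE w in M. nn_cond_exp M F (\<lambda>w. ennreal (\<bar>\<omega> w\<bar> powr p)) w \<le> ennreal \<nu>\<^sub>p"
    and moment_2: "p \<ge> 2 \<Longrightarrow> \<nu>\<^sub>2 > 0 \<and>
           (AE w in M. nn_cond_exp M F (\<lambda>w. ennreal ((\<omega> w)\<^sup>2)) w \<le> ennreal \<nu>\<^sub>2)"
    and tau_pos: "\<tau> > 0"
    and tau_small_p: "p < 2 \<Longrightarrow> \<tau> \<ge> (4 * \<nu>\<^sub>p) powr (1 / p)"
    and tau_large_p: "p \<ge> 2 \<Longrightarrow> \<tau> \<ge> sqrt (4 * \<nu>\<^sub>2)"
  shows "(\<exists>g. huber_argmin M X (surrogate Y X \<alpha> f\<^sub>0) \<alpha> \<tau> g)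
       \<and> (\<forall>g h. huber_argmin M X (surrogate Y X \<alpha> f\<^sub>0) \<alpha> \<tau> g
               \<longrightarrow> huber_argmin M X (surrogate Y X \<alpha> f\<^sub>0) \<alpha> \<tau> h
               \<longrightarrow> (AE x in distr M borel X. g x = h x))
       \<and> (\<forall>g. huber_argmin M X (surrogate Y X \<alpha> f\<^sub>0) \<alpha> \<tau> g
               \<longrightarrow> (AE x in distr M borel X. \<alpha> * \<bar>g x - g\<^sub>0 x\<bar> \<le> 2 * \<nu>\<^sub>p * \<tau> powr (1 - p)))"
proof -
  interpret P: prob_space M by (rule M)
  have Fdef: "F = vimage_algebra (space M) X borel"
    using \<open>F \<equiv> sigma_of M X\<close> unfolding sigma_of_def by simp
  have subalg: "subalgebra M F"
    unfolding subalgebra_def Fdef using X_meas measurable_iff_sets[of X M borel] by auto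
  interpret fms: finite_measure_subalgebra M F
    by (rule finite_measure_subalgebra.intro[OF P.finite_measure_axioms]) (unfold_locales, rule subalg)
  have XF: "X \<in> measurable F borel" unfolding Fdef by (rule measurable_vimage_algebra1) auto
  have compF: "(\<lambda>w. g (X w)) \<in> borel_measurable F" if "g \<in> borel_measurable borel" for g :: "real ^ 'd \<Rightarrow> real"
    using measurable_compose[OF XF that] by simp
  have [measurable]: "Y \<in> borel_measurable M" "X \<in> borel_measurable M"
    "f\<^sub>0 \<in> borel_measurable borel" "g\<^sub>0 \<in> borel_measurable borel"
    using Y_meas X_meas f0_meas g0_meas by auto
  define S where "S = {w. Y w \<le> f\<^sub>0 (X w)}"
  have em: "\<epsilon>\<^sub>m = (\<lambda>w. Y w * indicator S w - f\<^sub>0 (X w) * indicator S w)"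
    using \<open>\<epsilon>\<^sub>m \<equiv> (\<lambda>w. min (Y w - f\<^sub>0 (X w)) 0)\<close> by (auto simp: S_def indicator_def min_def fun_eq_iff)
  have indM: "(indicator S :: 'a \<Rightarrow> real) \<in> borel_measurable M"
  proof -
    have "S \<inter> space M = {w \<in> space M. Y w \<le> f\<^sub>0 (X w)}" by (auto simp: S_def)
    also have "\<dots> \<in> sets M" by measurable
    finally show ?thesis by (subst borel_measurable_indicator_iff)
  qed
  have em_meas[measurable]: "\<epsilon>\<^sub>m \<in> borel_measurable M"
    using \<open>\<epsilon>\<^sub>m \<equiv> (\<lambda>w. min (Y w - f\<^sub>0 (X w)) 0)\<close> by simp
  have iYI: "integrable M (\<lambda>w. Y w * indicator S w)" using ES_integrable by (simp add: S_def)
  have ifI: "integrable M (\<lambda>w. f\<^sub>0 (X w) * indicator S w)"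
  proof -
    have "integrable M (\<lambda>w. Y w * indicator S w - \<epsilon>\<^sub>m w)" using iYI eps_integrable by auto
    moreover have "(\<lambda>w. Y w * indicator S w - \<epsilon>\<^sub>m w) = (\<lambda>w. f\<^sub>0 (X w) * indicator S w)" by (simp add: em)
    ultimately show ?thesis by simp
  qed
  have ce_fI: "AE w in M. real_cond_exp M F (\<lambda>w. f\<^sub>0 (X w) * indicator S w) w = f\<^sub>0 (X w) * real_cond_exp M F (indicator S) w"
    by (rule fms.real_cond_exp_mult[OF compF[OF f0_meas] indM ifI])
  have ce_eps: "AE w in M. real_cond_exp M F \<epsilon>\<^sub>m w = \<alpha> * g\<^sub>0 (X w) - \<alpha> * f\<^sub>0 (X w)"
  proof -
    have "AE w in M. real_cond_exp M F (\<lambda>w. Y w * indicator S w - f\<^sub>0 (X w) * indicator S w) w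
      = real_cond_exp M F (\<lambda>w. Y w * indicator S w) w - real_cond_exp M F (\<lambda>w. f\<^sub>0 (X w) * indicator S w) w"
      by (rule fms.real_cond_exp_diff[OF iYI ifI])
    then show ?thesis using ce_fI quantile shortfall
    proof eventually_elim
      case (elim w)
      then show ?case using alpha by (simp add: em S_def field_simps)
    qed
  qed
  have omega_eq: "\<omega> = (\<lambda>w. \<epsilon>\<^sub>m w - real_cond_exp M F \<epsilon>\<^sub>m w)"
    using \<open>\<omega> \<equiv> (\<lambda>w. \<epsilon>\<^sub>m w - real_cond_exp M F \<epsilon>\<^sub>m w)\<close> by simp
  have om_meas[measurable]: "\<omega> \<in> borel_measurable M" unfolding omega_eq by measurable
  have ice: "integrable M (real_cond_exp M F \<epsilon>\<^sub>m)" by (rule fms.real_cond_exp_int(1)[OF eps_integrable])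
  have om_int: "integrable M \<omega>" unfolding omega_eq using eps_integrable ice by auto
  have om0: "AE w in M. real_cond_exp M F \<omega> w = 0"
  proof -
    have "AE w in M. real_cond_exp M F (\<lambda>w. \<epsilon>\<^sub>m w - real_cond_exp M F \<epsilon>\<^sub>m w) w
       = real_cond_exp M F \<epsilon>\<^sub>m w - real_cond_exp M F (real_cond_exp M F \<epsilon>\<^sub>m) w"
      by (rule fms.real_cond_exp_diff[OF eps_integrable ice])
    moreover have "AE w in M. real_cond_exp M F (real_cond_exp M F \<epsilon>\<^sub>m) w = real_cond_exp M F \<epsilon>\<^sub>m w"
      by (rule fms.real_cond_exp_F_meas[OF ice]) simp
    ultimately show ?thesis unfolding omega_eq by eventually_elim simp
  qed
  have Zeq: "AE w in M. surrogate Y X \<alpha> f\<^sub>0 w = \<alpha> * g\<^sub>0 (X w) + \<omega> w"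
    using ce_eps
  proof eventually_elim
    case (elim w)
    have "surrogate Y X \<alpha> f\<^sub>0 w = \<epsilon>\<^sub>m w + \<alpha> * f\<^sub>0 (X w)"
      using \<open>\<epsilon>\<^sub>m \<equiv> (\<lambda>w. min (Y w - f\<^sub>0 (X w)) 0)\<close> by (simp add: surrogate_def)
    then show ?case using elim unfolding omega_eq by simp
  qed
  have nup0: "0 \<le> \<nu>\<^sub>p" using nu_p by simp
  have mp: "integrable M (\<lambda>w. \<bar>\<omega> w\<bar> powr p)" "AE w in M. real_cond_exp M F (\<lambda>w. \<bar>\<omega> w\<bar> powr p) w \<le> \<nu>\<^sub>p"
    using fms.ce_from_nn[of "\<lambda>w. \<bar>\<omega> w\<bar> powr p" \<nu>\<^sub>p] moment_p nup0 by auto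
  have m2: "\<nu>\<^sub>2 > 0 \<and> integrable M (\<lambda>w. (\<omega> w)\<^sup>2) \<and> (AE w in M. real_cond_exp M F (\<lambda>w. (\<omega> w)\<^sup>2) w \<le> \<nu>\<^sub>2)"
    if p2: "p \<ge> 2"
  proof -
    have a: "\<nu>\<^sub>2 > 0" and b: "AE w in M. nn_cond_exp M F (\<lambda>w. ennreal ((\<omega> w)\<^sup>2)) w \<le> ennreal \<nu>\<^sub>2"
      using moment_2[OF p2] by auto
    show ?thesis using fms.ce_from_nn[of "\<lambda>w. (\<omega> w)\<^sup>2" \<nu>\<^sub>2] a b by auto
  qed
  have ts: "4 * \<nu>\<^sub>p \<le> \<tau> powr p" if "p < 2"
  proof -
    have "((4 * \<nu>\<^sub>p) powr (1 / p)) powr p \<le> \<tau> powr p"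
      using tau_small_p[OF that] p by (intro powr_mono2) auto
    moreover have "((4 * \<nu>\<^sub>p) powr (1 / p)) powr p = 4 * \<nu>\<^sub>p"
      using p nu_p by (simp add: powr_powr)
    ultimately show ?thesis by simp
  qed
  have tl: "4 * \<nu>\<^sub>2 \<le> \<tau>\<^sup>2" if "p \<ge> 2"
  proof -
    have n2: "\<nu>\<^sub>2 > 0" using moment_2[OF that] by simp
    have "(sqrt (4 * \<nu>\<^sub>2))\<^sup>2 \<le> \<tau>\<^sup>2" using tau_large_p[OF that] n2 by (intro power_mono) auto
    then show ?thesis using n2 by simp
  qed
  define \<delta> where "\<delta> = 2 * \<nu>\<^sub>p * \<tau> powr (1 - p)"
  define L where "L = (if p < 2 then 2 * \<nu>\<^sub>p * \<tau> powr (1 - p) else min (2 * \<nu>\<^sub>p * \<tau> powr (1 - p)) (\<tau> / 4))"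
  have \<delta>0: "\<delta> > 0" unfolding \<delta>_def using nu_p tau_pos by simp
  have Lp2: "L \<le> \<tau> / 2" if "p < 2"
    using delta_le[OF tau_pos, of 4 \<nu>\<^sub>p p] ts[OF that] that unfolding L_def by simp
  have Lq: "L \<le> \<tau> / 4" if "\<not> p < 2" using that unfolding L_def by simp
  have L0: "0 \<le> L" using \<delta>0 tau_pos unfolding L_def \<delta>_def by auto
  have Lt: "L < \<tau>" using Lp2 Lq tau_pos by (cases "p < 2") auto
  have Ld: "L \<le> \<delta>" unfolding L_def \<delta>_def by auto
  have DLom: "AE w in M. real_cond_exp M F (\<lambda>w. psi \<tau> (\<omega> w - L)) w \<le> 0"
    by (rule DL_gen[OF fms.finite_measure_subalgebra_axioms om_meas om_int om0 p nu_p mp(1) mp(2) m2 tau_pos ts tl L_def])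
  have DmLom: "AE w in M. real_cond_exp M F (\<lambda>w. psi \<tau> (\<omega> w + L)) w \<ge> 0"
  proof -
    have nm: "(\<lambda>w. - \<omega> w) \<in> borel_measurable M" by measurable
    have ni: "integrable M (\<lambda>w. - \<omega> w)" using om_int by auto
    have n0: "AE w in M. real_cond_exp M F (\<lambda>w. - \<omega> w) w = 0"
      using fms.real_cond_exp_cmult[OF om_int, of "-1"] om0 by eventually_elim simp
    have e1: "(\<lambda>w. \<bar>- \<omega> w\<bar> powr p) = (\<lambda>w. \<bar>\<omega> w\<bar> powr p)" by simp
    have e2: "(\<lambda>w. (- \<omega> w)\<^sup>2) = (\<lambda>w. (\<omega> w)\<^sup>2)" by simp
    have A: "AE w in M. real_cond_exp M F (\<lambda>w. psi \<tau> (- \<omega> w - L)) w \<le> 0"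
      by (rule DL_gen[OF fms.finite_measure_subalgebra_axioms nm ni n0 p nu_p _ _ _ tau_pos ts tl L_def])
         (use mp m2 in \<open>simp_all only: e1 e2\<close>)
    have ip: "integrable M (\<lambda>w. psi \<tau> (- \<omega> w - L))"
      by (rule P.integrable_const_bound[where B=\<tau>]) (use tau_pos psi_bound in auto)
    have pn: "psi \<tau> (\<omega> w + L) = -1 * psi \<tau> (- \<omega> w - L)" for w
      using tau_pos unfolding psi_def by (auto simp: max_def min_def)
    have "AE w in M. real_cond_exp M F (\<lambda>w. -1 * psi \<tau> (- \<omega> w - L)) w = -1 * real_cond_exp M F (\<lambda>w. psi \<tau> (- \<omega> w - L)) w"
      by (rule fms.real_cond_exp_cmult[OF ip])
    then show ?thesis using A unfolding pn by eventually_elim simp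
  qed
  interpret H: hcore M F \<omega> \<tau> L
    by (rule hcore.intro[OF M hcore_axioms.intro[OF subalg om_meas om_int tau_pos L0 Lt DLom DmLom]])
  define h where "h = H.hinf"
  have hF: "h \<in> borel_measurable F" unfolding h_def by (rule H.hinf_meas)
  have hb: "\<And>w. \<bar>h w\<bar> \<le> L" unfolding h_def by (rule H.hinf_bound)
  have hfix: "AE w in M. H.Dc h w = 0" unfolding h_def by (rule H.hinf_fix)
  obtain c where c_meas: "c \<in> borel_measurable borel" and c_eq: "\<And>w. w \<in> space M \<Longrightarrow> h w = c (X w)"
    using doob_dynkin[of h "space M" X] hF unfolding Fdef by blast
  define gs where "gs x = g\<^sub>0 x + c x / \<alpha>" for x
  have gs_meas: "gs \<in> borel_measurable borel" unfolding gs_def using c_meas g0_meas by measurable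
  define U where "U g w = \<alpha> * (g (X w) - g\<^sub>0 (X w))" for g :: "real ^ 'd \<Rightarrow> real" and w
  have UF: "U g \<in> borel_measurable F" if "g \<in> borel_measurable borel" for g
    unfolding U_def using compF[OF that] compF[OF g0_meas] by measurable
  have risk_eq: "huber_risk M X (surrogate Y X \<alpha> f\<^sub>0) \<alpha> \<tau> g = (\<integral>\<^sup>+ w. ennreal (huber_loss \<tau> (\<omega> w - U g w)) \<partial>M)" for g
    unfolding huber_risk_def
  proof (rule nn_integral_cong_AE)
    show "AE w in M. ennreal (huber_loss \<tau> (surrogate Y X \<alpha> f\<^sub>0 w - \<alpha> * g (X w))) = ennreal (huber_loss \<tau> (\<omega> w - U g w))"
      using Zeq by eventually_elim (simp add: U_def algebra_simps)
  qed
  have risk_gs: "huber_risk M X (surrogate Y X \<alpha> f\<^sub>0) \<alpha> \<tau> gs = (\<integral>\<^sup>+ w. ennreal (huber_loss \<tau> (\<omega> w - h w)) \<partial>M)"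
    unfolding risk_eq
  proof (rule nn_integral_cong)
    fix w assume "w \<in> space M"
    then have "U gs w = h w" using c_eq alpha by (simp add: U_def gs_def)
    then show "ennreal (huber_loss \<tau> (\<omega> w - U gs w)) = ennreal (huber_loss \<tau> (\<omega> w - h w))" by simp
  qed
  have gs_arg: "huber_argmin M X (surrogate Y X \<alpha> f\<^sub>0) \<alpha> \<tau> gs"
    unfolding huber_argmin_def
  proof (intro conjI ballI gs_meas)
    fix g :: "real ^ 'd \<Rightarrow> real" assume g: "g \<in> borel_measurable borel"
    show "huber_risk M X (surrogate Y X \<alpha> f\<^sub>0) \<alpha> \<tau> gs \<le> huber_risk M X (surrogate Y X \<alpha> f\<^sub>0) \<alpha> \<tau> g"
      unfolding risk_gs risk_eq[of g] by (rule H.optimal[OF hF hb hfix UF[OF g]])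
  qed
  have uniq: "AE w in M. u w = h w"
    if uF: "u \<in> borel_measurable F" and le: "(\<integral>\<^sup>+ w. ennreal (huber_loss \<tau> (\<omega> w - u w)) \<partial>M) \<le> (\<integral>\<^sup>+ w. ennreal (huber_loss \<tau> (\<omega> w - h w)) \<partial>M)" for u
  proof (cases "p < 2")
    case True
    have K: "\<nu>\<^sub>p < (\<tau> - L) powr p"
    proof -
      have "(\<tau> / 2) powr p \<le> (\<tau> - L) powr p" using Lp2[OF True] tau_pos p by (intro powr_mono2) auto
      moreover have "(\<tau> / 2) powr p = \<tau> powr p / 2 powr p" by (simp add: powr_divide)
      moreover have "2 powr p < 2 powr 2" using True by (intro powr_less_mono) auto
      moreover have "2 powr (2::real) = 4" by simp
      moreover have "4 * \<nu>\<^sub>p \<le> \<tau> powr p" by (rule ts[OF True])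
      ultimately have "4 * \<nu>\<^sub>p / 2 powr p \<le> (\<tau> - L) powr p"
        using divide_right_mono[of "4 * \<nu>\<^sub>p" "\<tau> powr p" "2 powr p"] by simp
      moreover have "\<nu>\<^sub>p < 4 * \<nu>\<^sub>p / 2 powr p"
      proof -
        have "\<nu>\<^sub>p * 2 powr p < \<nu>\<^sub>p * 4" using \<open>2 powr p < 2 powr 2\<close> nu_p by simp
        then show ?thesis by (simp add: field_simps)
      qed
      ultimately show ?thesis by simp
    qed
    show ?thesis
    proof (rule H.unique[OF hF hb hfix uF le, where \<Phi>="\<lambda>x. \<bar>x\<bar> powr p" and \<nu>="\<nu>\<^sub>p" and K="(\<tau> - L) powr p"])
      show "(\<lambda>w. \<bar>\<omega> w\<bar> powr p) \<in> borel_measurable M" by measurable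
      show "integrable M (\<lambda>w. \<bar>\<omega> w\<bar> powr p)" by (rule mp(1))
      show "AE w in M. real_cond_exp M F (\<lambda>w. \<bar>\<omega> w\<bar> powr p) w \<le> \<nu>\<^sub>p" by (rule mp(2))
      show "\<And>x. \<tau> - L \<le> \<bar>x\<bar> \<Longrightarrow> (\<tau> - L) powr p \<le> \<bar>x\<bar> powr p"
        using Lt p by (intro powr_mono2) auto
      show "\<nu>\<^sub>p < (\<tau> - L) powr p" by (rule K)
    qed
  next
    case False
    then have p2: "p \<ge> 2" by simp
    have m: "\<nu>\<^sub>2 > 0" "integrable M (\<lambda>w. (\<omega> w)\<^sup>2)" "AE w in M. real_cond_exp M F (\<lambda>w. (\<omega> w)\<^sup>2) w \<le> \<nu>\<^sub>2"
      using m2[OF p2] by auto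
    have K: "\<nu>\<^sub>2 < (\<tau> - L)\<^sup>2"
    proof -
      have "3 * \<tau> / 4 \<le> \<tau> - L" using Lq[OF False] by simp
      then have "(3 * \<tau> / 4)\<^sup>2 \<le> (\<tau> - L)\<^sup>2" using tau_pos by (intro power_mono) auto
      then have "9 * \<nu>\<^sub>2 \<le> 4 * (\<tau> - L)\<^sup>2" using tl[OF p2] by (simp add: power2_eq_square field_simps)
      then show ?thesis using m(1) by simp
    qed
    show ?thesis
    proof (rule H.unique[OF hF hb hfix uF le, where \<Phi>="\<lambda>x. x\<^sup>2" and \<nu>="\<nu>\<^sub>2" and K="(\<tau> - L)\<^sup>2"])
      show "(\<lambda>w. (\<omega> w)\<^sup>2) \<in> borel_measurable M" by measurable
      show "integrable M (\<lambda>w. (\<omega> w)\<^sup>2)" by (rule m(2))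
      show "AE w in M. real_cond_exp M F (\<lambda>w. (\<omega> w)\<^sup>2) w \<le> \<nu>\<^sub>2" by (rule m(3))
      show "\<And>x. \<tau> - L \<le> \<bar>x\<bar> \<Longrightarrow> (\<tau> - L)\<^sup>2 \<le> x\<^sup>2"
      proof -
        fix x :: real assume "\<tau> - L \<le> \<bar>x\<bar>"
        then have "(\<tau> - L)\<^sup>2 \<le> \<bar>x\<bar>\<^sup>2" using Lt by (intro power_mono) auto
        then show "(\<tau> - L)\<^sup>2 \<le> x\<^sup>2" by simp
      qed
      show "\<nu>\<^sub>2 < (\<tau> - L)\<^sup>2" by (rule K)
    qed
  qed
  have arg_ae: "AE w in M. U g w = h w" if g: "huber_argmin M X (surrogate Y X \<alpha> f\<^sub>0) \<alpha> \<tau> g" for g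
  proof -
    have gm: "g \<in> borel_measurable borel" using g unfolding huber_argmin_def by simp
    have "huber_risk M X (surrogate Y X \<alpha> f\<^sub>0) \<alpha> \<tau> g \<le> huber_risk M X (surrogate Y X \<alpha> f\<^sub>0) \<alpha> \<tau> gs"
      using g gs_meas unfolding huber_argmin_def by blast
    then show ?thesis unfolding risk_gs risk_eq[of g] by (rule uniq[OF UF[OF gm]])
  qed
  show ?thesis
  proof (intro conjI allI impI)
    show "\<exists>g. huber_argmin M X (surrogate Y X \<alpha> f\<^sub>0) \<alpha> \<tau> g" using gs_arg by blast
  next
    fix g1 g2 assume g1: "huber_argmin M X (surrogate Y X \<alpha> f\<^sub>0) \<alpha> \<tau> g1"
      and g2: "huber_argmin M X (surrogate Y X \<alpha> f\<^sub>0) \<alpha> \<tau> g2"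
    have [measurable]: "g1 \<in> borel_measurable borel" "g2 \<in> borel_measurable borel"
      using g1 g2 unfolding huber_argmin_def by auto
    have "AE w in M. g1 (X w) = g2 (X w)"
      using arg_ae[OF g1] arg_ae[OF g2]
    proof eventually_elim
      case (elim w)
      then have "\<alpha> * (g1 (X w) - g\<^sub>0 (X w)) = \<alpha> * (g2 (X w) - g\<^sub>0 (X w))" unfolding U_def by simp
      then show ?case using alpha by simp
    qed
    then show "AE x in distr M borel X. g1 x = g2 x"
      by (subst AE_distr_iff) auto
  next
    fix g assume g: "huber_argmin M X (surrogate Y X \<alpha> f\<^sub>0) \<alpha> \<tau> g"
    have [measurable]: "g \<in> borel_measurable borel" using g unfolding huber_argmin_def by auto
    have "AE w in M. \<alpha> * \<bar>g (X w) - g\<^sub>0 (X w)\<bar> \<le> 2 * \<nu>\<^sub>p * \<tau> powr (1 - p)"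
      using arg_ae[OF g]
    proof eventually_elim
      case (elim w)
      have "\<alpha> * \<bar>g (X w) - g\<^sub>0 (X w)\<bar> = \<bar>U g w\<bar>" unfolding U_def using alpha by (simp add: abs_mult)
      also have "\<dots> = \<bar>h w\<bar>" using elim by simp
      also have "\<dots> \<le> L" by (rule hb)
      also have "\<dots> \<le> 2 * \<nu>\<^sub>p * \<tau> powr (1 - p)" using Ld unfolding \<delta>_def .
      finally show ?case .
    qed
    then show "AE x in distr M borel X. \<alpha> * \<bar>g x - g\<^sub>0 x\<bar> \<le> 2 * \<nu>\<^sub>p * \<tau> powr (1 - p)"
      by (subst AE_distr_iff) auto
  qed
qed

end
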